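(* Let $\Omega\subset\mathbb{R}^3$ be a non-empty, open and convex set, $\rho\in L_2(\Omega;\mathbb{R}^+)$ (extended by zero outside $\Omega$), $P\in\mathbb{R}^{3\times 3}$ a constant (homogeneous) receive coil sensitivity, $\theta\in[0,\pi)$, $G\neq 0$ a gradient strength, $A_1,A_2\in\mathbb{R}$ amplitudes and $\Lambda_1,\Lambda_2\colon\mathbb{R}\to\mathbb{R}$ sinusoidal functions. Put $\bm{e}_\theta=(\cos\theta,\sin\theta,0)^T$, $\bm{e}_\theta^\perp=(-\sin\theta,\cos\theta,0)^T$, $\bm{e}_z=(0,0,1)^T$, and consider the magnetic field $$\bm{H}^\theta(\bm{x},t)=\bigl(A_1\Lambda_1(t)-G\langle\bm{x},\bm{e}_\theta^\perp\rangle\bigr)\bm{e}_\theta^\perp+\bigl(-A_2\Lambda_2(t)+G\langle \bm{x},\bm{e}_z\rangle\bigr)\bm{e}_z,$$ which vanishes on a line parallel to $\bm{e}_\theta$ (the field-free line, FFL). Let the induced signal be $$\bm{s}^\theta(t)=-\mu_0 m P\frac{d}{dt}\int_{\mathbb{R}^3}\rho(\bm{x})\,\mathcal{L}\Bigl(\frac{\lVert\bm{H}^\theta(\bm{x},t)\rVert}{H_{\mathrm{sat}}}\Bigr)\frac{\bm{H}^\theta(\bm{x},t)}{\lVert\bm{H}^\theta(\bm{x},t)\rVert}\,d\bm{x},$$ with constants $\mu_0,m,H_{\mathrm{sat}}>0$, and set $h=H_{\mathrm{sat}}/G$. Let $\mathbf{L}_\theta=\langle\bm{e}_\theta\rangle^\perp$,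 described in the rotated coordinates $(\eta,\xi,z)$ (where $\bm{x}=\eta\bm{e}_\theta+\xi\bm{e}_\theta^\perp+z\bm{e}_z$) as the set of points $\bm{y}=(0,\xi,z)$, and let $X_\theta[\rho](\xi,z)=\int_{\mathbb{R}}\rho(\eta\bm{e}_\theta+\xi\bm{e}_\theta^\perp+z\bm{e}_z)\,d\eta$ be the X-ray projection of $\rho$ in direction $\bm{e}_\theta$. Let $\bm{r}(t)=\bigl(0,\,A_1\Lambda_1(t)/G,\,A_2\Lambda_2(t)/G\bigr)^T$ (in the rotated coordinates) be the trajectory of the intersection point of the FFL with $\mathbf{L}_\theta$ and $\bm{v}(t)=\frac{d}{dt}\bm{r}(t)$. Then $$\bm{s}^\theta(t)=-\mu_0 m P E_\theta\, A_{h,\theta}\bigl[X_\theta[\rho]\bigr]\bigl(\bm{r}(t)\bigr)\,\bm{v}(t),\qquad E_\theta=\begin{pmatrix}\cos\theta&-\sin\theta&0\\ \sin\theta&\cos\theta&0\\0&0&-1\end{pmatrix},$$ where for a function $q$ on $\mathbf{L}_\theta$ and $\bm{r}\in\mathbf{L}_\theta$, $$A_{h,\theta}[q](\bm{r})=\int_{\mathbf{L}_\theta} q(\bm{y})\,\nabla_{\bm{r}}\Bigl(\mathcal{L}\Bigl(\frac{\lVert\bm{r}-\bm{y}\rVert}{h}\Bigr)\frac{\bm{r}-\bm{y}}{\lVert\bm{r}-\bm{y}\rVert}\Bigr)\,d\bm{y}$$ (the MPI Core Operator on the plane $\mathbf{L}_\theta$; the gradient is taken with respect to $\bm{r}$ within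 $\mathbf{L}_\theta$, and the resulting $2\times 2$ matrix acts on the in-plane components $(v_2,v_3)$ of $\bm{v}(t)$, the result being regarded as a vector $(0,\cdot,\cdot)^T\in\mathbb{R}^3$).
   Context: $\mathcal{L}(x)=\coth(x)-1/x$ is the Langevin function (with $\mathcal{L}(0)=0$). $\langle\cdot,\cdot\rangle$ is the standard scalar product. The signal model corresponds to Langevin magnetization $\bm{M}=m\rho\,\mathcal{L}(\lVert\bm{H}\rVert/H_{\mathrm{sat}})\bm{H}/\lVert\bm{H}\rVert$ and Faraday's law with constant coil sensitivity $P$. *)

theory Defs
  imports "HOL-Analysis.Analysis"
begin

definition langevin :: "real \<Rightarrow> real" where
  "langevin x = (if x = 0 then 0 else cosh x / sinh x - 1 / x)"

text \<open>Sinusoidal function (unit amplitude; amplitudes are separate parameters).\<close>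
definition sinusoidal :: "(real \<Rightarrow> real) \<Rightarrow> bool" where
  "sinusoidal f \<longleftrightarrow> (\<exists>\<omega> \<phi>. \<forall>t. f t = sin (\<omega> * t + \<phi>))"

definition e_theta :: "real \<Rightarrow> real^3" where
  "e_theta \<theta> = vector [cos \<theta>, sin \<theta>, 0]"

definition e_theta_perp :: "real \<Rightarrow> real^3" where
  "e_theta_perp \<theta> = vector [- sin \<theta>, cos \<theta>, 0]"

definition e_z :: "real^3" where
  "e_z = vector [0, 0, 1]"

definition H_ffl :: "real \<Rightarrow> real \<Rightarrow> real \<Rightarrow> (real \<Rightarrow> real) \<Rightarrow> (real \<Rightarrow> real)
    \<Rightarrow> real \<Rightarrow> real^3 \<Rightarrow> real \<Rightarrow> real^3" where
  "H_ffl \<theta> A1 A2 \<Lambda>1 \<Lambda>2 G x t =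
     (A1 * \<Lambda>1 t - G * (x \<bullet> e_theta_perp \<theta>)) *\<^sub>R e_theta_perp \<theta>
   + (- A2 * \<Lambda>2 t + G * (x \<bullet> e_z)) *\<^sub>R e_z"

definition langevin_field :: "real \<Rightarrow> 'a::real_normed_vector \<Rightarrow> 'a" where
  "langevin_field c u = langevin (norm u / c) *\<^sub>R sgn u"

text \<open>Signal s^theta(t) = - mu0 m P d/dt (integral), given as derivative of the
  magnetization integral; here the integral itself (mean magnetization integral).\<close>
definition magn_integral :: "(real^3 \<Rightarrow> real) \<Rightarrow> real \<Rightarrow> real \<Rightarrow> real \<Rightarrow> (real \<Rightarrow> real)
    \<Rightarrow> (real \<Rightarrow> real) \<Rightarrow> real \<Rightarrow> real \<Rightarrow> real \<Rightarrow> real^3" where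
  "magn_integral \<rho> \<theta> A1 A2 \<Lambda>1 \<Lambda>2 G Hsat t =
     (LINT x|lborel. \<rho> x *\<^sub>R langevin_field Hsat (H_ffl \<theta> A1 A2 \<Lambda>1 \<Lambda>2 G x t))"

text \<open>X-ray projection in direction e_theta; the plane L_theta is parametrised by
  (xi, z) = (p$1, p$2) in real^2.\<close>
definition xray :: "real \<Rightarrow> (real^3 \<Rightarrow> real) \<Rightarrow> real^2 \<Rightarrow> real" where
  "xray \<theta> \<rho> p = (LINT \<eta>|lborel. \<rho> (\<eta> *\<^sub>R e_theta \<theta> + (p$1) *\<^sub>R e_theta_perp \<theta> + (p$2) *\<^sub>R e_z))"

definition core_op :: "real \<Rightarrow> (real^2 \<Rightarrow> real) \<Rightarrow> real^2 \<Rightarrow> real^2^2" where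
  "core_op h q r =
     (LINT y|lborel. q y *\<^sub>R matrix (frechet_derivative (\<lambda>r'. langevin_field h (r' - y)) (at r)))"

definition E_rot :: "real \<Rightarrow> real^3^3" where
  "E_rot \<theta> = vector [vector [cos \<theta>, - sin \<theta>, 0],
                     vector [sin \<theta>, cos \<theta>, 0],
                     vector [0, 0, -1]]"

definition embed_plane :: "real^2 \<Rightarrow> real^3" where
  "embed_plane w = vector [0, w$1, w$2]"

definition ffl_traj :: "real \<Rightarrow> real \<Rightarrow> (real \<Rightarrow> real) \<Rightarrow> (real \<Rightarrow> real) \<Rightarrow> real \<Rightarrow> real \<Rightarrow> real^2" where
  "ffl_traj A1 A2 \<Lambda>1 \<Lambda>2 G t = vector [A1 * \<Lambda>1 t / G, A2 * \<Lambda>2 t / G]"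

end

theory Submission imports Defs "HOL-Real_Asymp.Real_Asymp" begin


lemma sinh_ge_self: "0 \<le> (x::real) \<Longrightarrow> x \<le> sinh x"
  using real_le_x_sinh[of x] by (simp add: sinh_field_def exp_minus)

lemma sinh_le_x_cosh: "0 \<le> (x::real) \<Longrightarrow> sinh x \<le> x * cosh x"
proof -
  assume x: "0 \<le> x"
  have d: "DERIV (\<lambda>y. y * cosh y - sinh y) y :> y * sinh y" for y :: real
    by (auto intro!: derivative_eq_intros)
  have "(\<lambda>y. y * cosh y - sinh y) 0 \<le> (\<lambda>y. y * cosh y - sinh y) x"
    by (rule DERIV_nonneg_imp_nondecreasing[OF x], rule exI, rule conjI, rule d, auto)
  then show ?thesis by simp
qed

lemma langevin_aux3: "0 \<le> (x::real) \<Longrightarrow> x * cosh x - sinh x \<le> x^2 * sinh x"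
proof -
  assume x: "0 \<le> x"
  have d: "DERIV (\<lambda>y. y^2 * sinh y - y * cosh y + sinh y) y :> y * sinh y + y^2 * cosh y" for y :: real
    by (auto intro!: derivative_eq_intros simp: algebra_simps power2_eq_square)
  have "(\<lambda>y. y^2 * sinh y - y * cosh y + sinh y) 0 \<le> (\<lambda>y. y^2 * sinh y - y * cosh y + sinh y) x"
    by (rule DERIV_nonneg_imp_nondecreasing[OF x], rule exI, rule conjI, rule d, auto)
  then show ?thesis by simp
qed

lemma langevin_minus: "langevin (- x) = - langevin x"
  by (simp add: langevin_def)

lemma langevin_abs_le_pos: "0 < (x::real) \<Longrightarrow> 0 \<le> langevin x \<and> langevin x \<le> x"
proof -
  assume x: "0 < x"
  have s: "sinh x > 0" using x by simp
  have a: "sinh x \<le> x * cosh x" using sinh_le_x_cosh[of x] x by simp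
  have b: "x * cosh x - sinh x \<le> x^2 * sinh x" using langevin_aux3[of x] x by simp
  have "0 \<le> cosh x / sinh x - 1 / x" using a s x by (simp add: field_simps)
  moreover have "cosh x / sinh x - 1 / x \<le> x" using b s x by (simp add: field_simps power2_eq_square)
  ultimately show ?thesis using x by (simp add: langevin_def)
qed

lemma langevin_abs_le: "\<bar>langevin x\<bar> \<le> \<bar>x\<bar>"
proof -
  consider "x = 0" | "x > 0" | "x < 0" by linarith
  then show ?thesis
  proof cases
    case 1 then show ?thesis by (simp add: langevin_def)
  next
    case 2 then show ?thesis using langevin_abs_le_pos[of x] by simp
  next
    case 3 then show ?thesis using langevin_abs_le_pos[of "-x"] by (simp add: langevin_minus)
  qed
qed

definition langevin' :: "real \<Rightarrow> real" where
  "langevin' x = 1 / x^2 - 1 / (sinh x)^2"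

lemma langevin'_bound: "\<bar>langevin' x\<bar> \<le> 1"
proof (cases "x = 0")
  case True then show ?thesis by (simp add: langevin'_def)
next
  case False
  define a where "a = \<bar>x\<bar>"
  have a: "a > 0" using False by (simp add: a_def)
  have e1: "x^2 = a^2" by (simp add: a_def)
  have e2: "(sinh x)^2 = (sinh a)^2" by (simp add: a_def)
  have s1: "a \<le> sinh a" using sinh_ge_self[of a] a by simp
  have s2: "sinh a \<le> a * cosh a" using sinh_le_x_cosh[of a] a by simp
  have sp: "sinh a > 0" using a by simp
  have c: "(cosh a)^2 = (sinh a)^2 + 1" by (simp add: cosh_square_eq)
  have "a^2 \<le> (sinh a)^2" using s1 a by (simp add: power_mono)
  then have l: "1 / (sinh a)^2 \<le> 1 / a^2" using a by (simp add: frac_le)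
  have "(sinh a)^2 \<le> (a * cosh a)^2" using s2 sp by (simp add: power_mono)
  then have "(sinh a)^2 - a^2 \<le> a^2 * (sinh a)^2" using c by (simp add: power_mult_distrib algebra_simps)
  then have u: "1 / a^2 - 1 / (sinh a)^2 \<le> 1" using a sp by (simp add: field_simps)
  show ?thesis using l u by (simp add: langevin'_def e1 e2)
qed

lemma langevin_deriv: "x \<noteq> 0 \<Longrightarrow> (langevin has_real_derivative langevin' x) (at x)"
proof -
  assume x: "x \<noteq> 0"
  have sx: "sinh x \<noteq> 0" using x by simp
  have cc: "cosh x * cosh x = sinh x * sinh x + 1" using cosh_square_eq[of x] by (simp add: power2_eq_square)
  have d: "((\<lambda>y. cosh y / sinh y - 1 / y) has_real_derivative langevin' x) (at x)"
    using x sx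
    by (auto intro!: derivative_eq_intros simp: langevin'_def field_simps power2_eq_square cc)
  show ?thesis
    by (rule has_field_derivative_transform_within_open[OF d, of "-{0}"]) (use x in \<open>auto simp: langevin_def\<close>)
qed

lemma langevin_lim: "((\<lambda>x. langevin x / x) \<longlongrightarrow> 1/3) (at 0)"
proof -
  have l: "((\<lambda>x::real. (cosh x / sinh x - 1/x)/x) \<longlongrightarrow> 1/3) (at 0)"
    unfolding cosh_field_def sinh_field_def by real_asymp
  have ev: "\<forall>\<^sub>F x in at (0::real). (cosh x / sinh x - 1/x)/x = langevin x / x"
    by (simp add: eventually_at_filter langevin_def)
  show ?thesis by (rule Lim_transform_eventually[OF l ev])
qed



definition psi :: "real \<Rightarrow> real \<Rightarrow> real" where
  "psi h s = langevin (s / h) / s"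
definition psi' :: "real \<Rightarrow> real \<Rightarrow> real" where
  "psi' h s = (langevin' (s / h) / h * s - langevin (s / h)) / s^2"

definition DF :: "real \<Rightarrow> 'a::real_inner \<Rightarrow> 'a \<Rightarrow> 'a" where
  "DF h u = (if u = 0 then (\<lambda>w. (1 / (3 * h)) *\<^sub>R w)
             else (\<lambda>w. (psi' h (norm u) * (w \<bullet> sgn u)) *\<^sub>R u + psi h (norm u) *\<^sub>R w))"

lemma F_eq: "langevin_field h v = psi h (norm v) *\<^sub>R v"
  by (simp add: langevin_field_def psi_def sgn_div_norm divide_inverse_commute)

lemma psi_deriv:
  assumes h: "h \<noteq> 0" and s: "s > 0"
  shows "(psi h has_real_derivative psi' h s) (at s)"
proof -
  have sh: "s / h \<noteq> 0" using h s by simp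
  have d1: "((\<lambda>x. langevin (x / h)) has_real_derivative langevin' (s / h) * (1 / h)) (at s)"
    by (rule DERIV_chain2[of langevin _ "\<lambda>x. x / h", OF langevin_deriv[OF sh]]) (use h in \<open>auto intro!: derivative_eq_intros\<close>)
  have d2: "((\<lambda>x. langevin (x / h) / x) has_real_derivative
      (langevin' (s / h) * (1 / h) * s - langevin (s / h) * 1) / (s * s)) (at s)"
    by (rule DERIV_divide[OF d1 DERIV_ident]) (use s in simp)
  show ?thesis
    using d2 unfolding psi_def[abs_def] psi'_def by (simp add: power2_eq_square)
qed

lemma psi_bound: "h \<noteq> 0 \<Longrightarrow> s > 0 \<Longrightarrow> \<bar>psi h s\<bar> \<le> 1 / \<bar>h\<bar>"
proof -
  assume h: "h \<noteq> 0" and s: "s > 0"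
  have "\<bar>psi h s\<bar> = \<bar>langevin (s / h)\<bar> / s" using s by (simp add: psi_def abs_div)
  also have "\<dots> \<le> \<bar>s / h\<bar> / s" by (rule divide_right_mono[OF langevin_abs_le]) (use s in simp)
  also have "\<bar>s / h\<bar> / s = 1 / \<bar>h\<bar>" using s h by (simp add: abs_div)
  finally show ?thesis .
qed

lemma psi'_bound: "h \<noteq> 0 \<Longrightarrow> s > 0 \<Longrightarrow> \<bar>psi' h s\<bar> * s \<le> 2 / \<bar>h\<bar>"
proof -
  assume h: "h \<noteq> 0" and s: "s > 0"
  have e0: "psi' h s * s = langevin' (s / h) / h - psi h s"
    using s by (simp add: psi'_def psi_def power2_eq_square field_simps)
  have e: "\<bar>psi' h s\<bar> * s = \<bar>langevin' (s / h) / h - psi h s\<bar>"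
    using s e0 by (metis abs_mult abs_of_pos)
  have a: "\<bar>langevin' (s / h) / h\<bar> \<le> 1 / \<bar>h\<bar>"
    using langevin'_bound[of "s/h"] h by (simp add: abs_div divide_right_mono)
  have b: "\<bar>psi h s\<bar> \<le> 1 / \<bar>h\<bar>" by (rule psi_bound[OF h s])
  have "\<bar>langevin' (s / h) / h - psi h s\<bar> \<le> \<bar>langevin' (s / h) / h\<bar> + \<bar>psi h s\<bar>"
    by (rule abs_triangle_ineq4)
  then show ?thesis using e a b by simp
qed

lemma F_has_deriv:
  fixes u :: "'a::real_inner"
  assumes h: "h \<noteq> 0"
  shows "(langevin_field h has_derivative DF h u) (at u)"
proof (cases "u = 0")
  case False
  have n: "norm u > 0" using False by simp
  have dn: "(norm has_derivative (\<lambda>w. w \<bullet> sgn u)) (at u)" by (rule has_derivative_norm[OF False])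
  have dp: "(psi h has_derivative (\<lambda>x. psi' h (norm u) * x)) (at (norm u))"
    using psi_deriv[OF h n] by (simp add: has_field_derivative_def)
  have dc: "((\<lambda>v. psi h (norm v)) has_derivative (\<lambda>w. psi' h (norm u) * (w \<bullet> sgn u))) (at u)"
    using has_derivative_compose[OF dn dp] by (simp add: o_def)
  have "((\<lambda>v. psi h (norm v) *\<^sub>R v) has_derivative
        (\<lambda>w. psi h (norm u) *\<^sub>R w + (psi' h (norm u) * (w \<bullet> sgn u)) *\<^sub>R u)) (at u)"
    by (rule has_derivative_scaleR[OF dc has_derivative_ident])
  then show ?thesis
    using False unfolding F_eq[abs_def] DF_def by (simp add: algebra_simps)
next
  case True
  have bl: "bounded_linear (\<lambda>w::'a. (1 / (3 * h)) *\<^sub>R w)"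
    by (rule bounded_linear_scaleR_right)
  have lim1: "filterlim (\<lambda>y::'a. norm y / h) (at 0) (at 0)"
  proof (rule filterlim_atI)
    show "((\<lambda>y::'a. norm y / h) \<longlongrightarrow> 0) (at 0)"
      using h by (auto intro!: tendsto_eq_intros)
    show "\<forall>\<^sub>F y in at (0::'a). norm y / h \<noteq> 0"
      using h by (simp add: eventually_at_filter)
  qed
  have lim2: "((\<lambda>y::'a. langevin (norm y / h) / (norm y / h)) \<longlongrightarrow> 1/3) (at 0)"
    by (rule filterlim_compose[OF langevin_lim lim1])
  have lim3: "((\<lambda>y::'a. \<bar>langevin (norm y / h) / (norm y / h) - 1/3\<bar> / \<bar>h\<bar>) \<longlongrightarrow> \<bar>1/3 - 1/3\<bar> / \<bar>h\<bar>) (at 0)"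
    by (rule tendsto_divide[OF tendsto_rabs[OF tendsto_diff[OF lim2 tendsto_const]] tendsto_const]) (use h in simp)
  have ev: "\<forall>\<^sub>F y in at (0::'a). \<bar>langevin (norm y / h) / (norm y / h) - 1/3\<bar> / \<bar>h\<bar>
      = norm (langevin_field h y - langevin_field h 0 - (1 / (3 * h)) *\<^sub>R (y - 0)) / norm (y - 0)"
  proof -
    have "\<bar>langevin (norm y / h) / (norm y / h) - 1/3\<bar> / \<bar>h\<bar>
      = norm (langevin_field h y - langevin_field h 0 - (1 / (3 * h)) *\<^sub>R (y - 0)) / norm (y - 0)"
      if y: "y \<noteq> 0" for y :: 'a
    proof -
      have "langevin_field h y - langevin_field h 0 - (1 / (3 * h)) *\<^sub>R (y - 0)
          = (psi h (norm y) - 1 / (3 * h)) *\<^sub>R y"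
        by (simp add: F_eq algebra_simps)
      then have "norm (langevin_field h y - langevin_field h 0 - (1 / (3 * h)) *\<^sub>R (y - 0)) / norm (y - 0)
          = \<bar>psi h (norm y) - 1 / (3 * h)\<bar>" using y by simp
      also have "\<dots> = \<bar>langevin (norm y / h) / (norm y / h) - 1/3\<bar> / \<bar>h\<bar>"
      proof -
        have "psi h (norm y) - 1 / (3 * h) = (langevin (norm y / h) / (norm y / h) - 1/3) / h"
          using y h by (simp add: psi_def field_simps)
        then show ?thesis by (simp add: abs_div)
      qed
      finally show ?thesis by simp
    qed
    then show ?thesis by (simp add: eventually_at_filter)
  qed
  have "((\<lambda>y::'a. norm (langevin_field h y - langevin_field h 0 - (1 / (3 * h)) *\<^sub>R (y - 0)) / norm (y - 0)) \<longlongrightarrow> 0) (at 0)"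
    using Lim_transform_eventually[OF lim3 ev] by simp
  then have "(langevin_field h has_derivative (\<lambda>w::'a. (1 / (3 * h)) *\<^sub>R w)) (at 0)"
    using bl by (simp add: has_derivative_iff_norm)
  then show ?thesis using True by (simp add: DF_def)
qed

lemma DF_bound:
  fixes u w :: "'a::real_inner"
  assumes h: "h \<noteq> 0"
  shows "norm (DF h u w) \<le> 3 / \<bar>h\<bar> * norm w"
proof (cases "u = 0")
  case True
  have "norm (DF h u w) = norm w / (3 * \<bar>h\<bar>)" using True by (simp add: DF_def abs_mult)
  also have "\<dots> \<le> 3 / \<bar>h\<bar> * norm w" using h by (simp add: field_simps)
  finally show ?thesis .
next
  case False
  define s where "s = norm u"
  have s: "s > 0" using False by (simp add: s_def)
  have cs: "\<bar>w \<bullet> sgn u\<bar> \<le> norm w"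
    using Cauchy_Schwarz_ineq2[of w "sgn u"] False by (simp add: norm_sgn)
  have "norm (DF h u w) = norm ((psi' h s * (w \<bullet> sgn u)) *\<^sub>R u + psi h s *\<^sub>R w)"
    using False by (simp add: DF_def s_def)
  also have "\<dots> \<le> norm ((psi' h s * (w \<bullet> sgn u)) *\<^sub>R u) + norm (psi h s *\<^sub>R w)"
    by (rule norm_triangle_ineq)
  also have "norm ((psi' h s * (w \<bullet> sgn u)) *\<^sub>R u) = (\<bar>psi' h s\<bar> * s) * \<bar>w \<bullet> sgn u\<bar>"
    by (simp add: s_def abs_mult)
  also have "\<dots> \<le> (2 / \<bar>h\<bar>) * norm w"
    by (rule mult_mono[OF psi'_bound[OF h s] cs]) auto
  also have "norm (psi h s *\<^sub>R w) \<le> (1 / \<bar>h\<bar>) * norm w"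
    using mult_right_mono[OF psi_bound[OF h s] norm_ge_zero[of w]] by simp
  finally show ?thesis by (simp add: field_simps)
qed

lemma F_lipschitz:
  fixes a b :: "'a::{real_inner,perfect_space}"
  assumes h: "h \<noteq> 0"
  shows "norm (langevin_field h a - langevin_field h b) \<le> 3 / \<bar>h\<bar> * norm (a - b)"
proof (rule differentiable_bound[of UNIV])
  show "(langevin_field h has_derivative DF h x) (at x within UNIV)" for x :: 'a
    by (rule F_has_deriv[OF h])
  show "onorm (DF h x) \<le> 3 / \<bar>h\<bar>" for x :: 'a
    by (rule onorm_le) (rule DF_bound[OF h])
qed auto



lemma prod_Basis_cart: "(\<Prod>b\<in>(Basis :: (real^'n) set). f b) = (\<Prod>i\<in>UNIV. f (axis i 1))"
proof -
  have B: "(Basis :: (real^'n) set) = range (\<lambda>i. axis i (1::real))"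
    by (auto simp: Basis_vec_def)
  have "inj (\<lambda>i::'n. axis i (1::real))" by (auto intro!: injI simp: axis_eq_axis)
  then show ?thesis unfolding B by (simp add: prod.reindex)
qed

lemma UNIV3_prod: "prod f (UNIV::3 set) = f 1 * f 2 * f 3"
  unfolding UNIV_3 by (simp add: ac_simps)
lemma UNIV2_prod: "prod f (UNIV::2 set) = f 1 * f 2"
  unfolding UNIV_2 by (simp add: ac_simps)

definition Smap :: "(real^2) \<times> real \<Rightarrow> real^3" where
  "Smap z = vector [snd z, fst z $ 1, fst z $ 2]"

lemma Smap_linear: "linear Smap"
  by (rule linearI) (auto simp: Smap_def vec_eq_iff forall_3)

lemma Smap_measurable[measurable]: "Smap \<in> borel_measurable borel"
  by (rule borel_measurable_continuous_onI) (simp add: Smap_linear linear_continuous_on linear_linear)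

lemma Smap_distr: "distr lborel borel Smap = (lborel :: (real^3) measure)"
proof (rule lborel_eqI[symmetric])
  fix l u :: "real^3"
  assume lu: "\<And>b. b \<in> Basis \<Longrightarrow> l \<bullet> b \<le> u \<bullet> b"
  have lui: "l $ i \<le> u $ i" for i
    using lu[of "axis i 1"] by (simp add: cart_eq_inner_axis)
  define a :: "real^2" where "a = vector [l$2, l$3]"
  define b :: "real^2" where "b = vector [u$2, u$3]"
  have abi: "a $ i \<le> b $ i" for i
    using exhaust_2[of i] by (auto simp: a_def b_def lui)
  have ab: "a \<bullet> c \<le> b \<bullet> c" if "c \<in> Basis" for c
    using that abi by (auto simp: Basis_vec_def inner_axis)
  have pre: "Smap -` box l u = box a b \<times> {l$1<..<u$1}"
    by (auto simp: Smap_def mem_box_cart forall_3 forall_2 a_def b_def)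
  have "emeasure (distr lborel borel Smap) (box l u) = emeasure (lborel :: ((real^2) \<times> real) measure) (box a b \<times> {l$1<..<u$1})"
    by (simp add: emeasure_distr pre)
  also have "\<dots> = emeasure (lborel \<Otimes>\<^sub>M lborel) (box a b \<times> {l$1<..<u$1})"
    by (simp add: lborel_prod)
  also have "\<dots> = emeasure lborel (box a b) * emeasure lborel {l$1<..<u$1}"
    by (rule lborel.emeasure_pair_measure_Times) auto
  also have "emeasure lborel (box a b) = ennreal ((u$2 - l$2) * (u$3 - l$3))"
  proof -
    have "emeasure lborel (box a b) = (\<Prod>c\<in>Basis. (b - a) \<bullet> c)"
      by (rule emeasure_lborel_box[OF ab])
    then show ?thesis by (simp add: prod_Basis_cart UNIV2_prod inner_axis a_def b_def)
  qed
  also have "emeasure lborel {l$1<..<u$1} = ennreal (u$1 - l$1)"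
    using lui by simp
  also have "ennreal ((u$2 - l$2) * (u$3 - l$3)) * ennreal (u$1 - l$1) = ennreal ((u$1 - l$1) * (u$2 - l$2) * (u$3 - l$3))"
    using lui by (simp add: ennreal_mult'[symmetric] mult.commute mult.left_commute)
  also have "(u$1 - l$1) * (u$2 - l$2) * (u$3 - l$3) = (\<Prod>b\<in>Basis. (u - l) \<bullet> b)"
    by (simp add: prod_Basis_cart UNIV3_prod inner_axis)
  finally show "emeasure (distr lborel borel Smap) (box l u) = (\<Prod>b\<in>Basis. (u - l) \<bullet> b)" .
qed simp



definition Gmap :: "real \<Rightarrow> real^3 \<Rightarrow> real^3" where
  "Gmap \<theta> v = (v$1) *\<^sub>R e_theta \<theta> + (v$2) *\<^sub>R e_theta_perp \<theta> + (v$3) *\<^sub>R e_z"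

lemma Gmap_linear: "linear (Gmap \<theta>)"
  by (rule linearI) (auto simp: Gmap_def algebra_simps)

lemma Gmap_axis: "Gmap \<theta> (axis 1 1) = e_theta \<theta>" "Gmap \<theta> (axis 2 1) = e_theta_perp \<theta>"
   "Gmap \<theta> (axis 3 1) = e_z"
  by (simp_all add: Gmap_def axis_def)

lemma Gmap_det: "\<bar>det (matrix (Gmap \<theta>))\<bar> = 1"
proof -
  have m: "matrix (Gmap \<theta>) $ i $ j = Gmap \<theta> (axis j 1) $ i" for i j
    by (simp add: matrix_def)
  have "det (matrix (Gmap \<theta>)) = (cos \<theta>)^2 + (sin \<theta>)^2"
    unfolding det_3 m Gmap_axis by (simp add: e_theta_def e_theta_perp_def e_z_def power2_eq_square)
  then show ?thesis by simp
qed

lemma Gmap_surj: "range (Gmap \<theta>) = UNIV"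
proof -
  have c2: "cos \<theta> * (cos \<theta> * y) + sin \<theta> * (sin \<theta> * y) = y" for y
  proof -
    have "cos \<theta> * (cos \<theta> * y) + sin \<theta> * (sin \<theta> * y) = (cos \<theta> * cos \<theta> + sin \<theta> * sin \<theta>) * y"
      by algebra
    then show ?thesis by (simp only: sin_cos_squared_add3 mult_1)
  qed
  have "Gmap \<theta> (vector [x \<bullet> e_theta \<theta>, x \<bullet> e_theta_perp \<theta>, x \<bullet> e_z]) = x" for x
  proof -
    show ?thesis
      unfolding vec_eq_iff forall_3
      by (simp add: Gmap_def e_theta_def e_theta_perp_def e_z_def inner_vec_def sum_3 algebra_simps c2)
  qed
  then show ?thesis by (metis surj_def)
qed

lemma abs_int_iff_lborel:
  fixes f :: "'a::euclidean_space \<Rightarrow> 'b::euclidean_space"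
  assumes "f \<in> borel_measurable lborel"
  shows "f absolutely_integrable_on UNIV \<longleftrightarrow> integrable lborel f"
  using assms by (simp add: set_integrable_def integrable_completion)

lemma cv_rot:
  fixes k :: "real^3 \<Rightarrow> real^'n"
  assumes k: "integrable lborel k"
  shows "integrable lborel (\<lambda>v. k (Gmap \<theta> v))" and "(LINT v|lborel. k (Gmap \<theta> v)) = (LINT x|lborel. k x)"
proof -
  have km[measurable]: "k \<in> borel_measurable borel" using borel_measurable_integrable[OF k] by simp
  have gm[measurable]: "Gmap \<theta> \<in> borel_measurable borel"
    by (rule borel_measurable_continuous_onI) (simp add: Gmap_linear linear_continuous_on linear_linear)
  have kgm: "(\<lambda>v. k (Gmap \<theta> v)) \<in> borel_measurable lborel" by measurable
  have ka: "k absolutely_integrable_on (Gmap \<theta> ` UNIV)"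
    using k by (simp add: Gmap_surj abs_int_iff_lborel)
  have "(\<lambda>x. \<bar>det (matrix (Gmap \<theta>))\<bar> *\<^sub>R k (Gmap \<theta> x)) absolutely_integrable_on UNIV"
    using absolutely_integrable_change_of_variables_linear[OF Gmap_linear] ka by blast
  then have kga: "(\<lambda>x. k (Gmap \<theta> x)) absolutely_integrable_on UNIV"
    by (simp add: Gmap_det)
  then show kgi: "integrable lborel (\<lambda>v. k (Gmap \<theta> v))"
    using kgm by (simp add: abs_int_iff_lborel)
  have "integral (Gmap \<theta> ` UNIV) k = \<bar>det (matrix (Gmap \<theta>))\<bar> *\<^sub>R integral UNIV (k \<circ> Gmap \<theta>)"
    by (rule integral_change_of_variables_linear[OF Gmap_linear]) (use ka in blast)
  then have "integral UNIV k = integral UNIV (\<lambda>v. k (Gmap \<theta> v))"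
    by (simp add: Gmap_det Gmap_surj o_def)
  then show "(LINT v|lborel. k (Gmap \<theta> v)) = (LINT x|lborel. k x)"
    using integral_lborel[OF k] integral_lborel[OF kgi] by simp
qed

definition Tmap :: "real \<Rightarrow> (real^2) \<times> real \<Rightarrow> real^3" where
  "Tmap \<theta> z = snd z *\<^sub>R e_theta \<theta> + (fst z $ 1) *\<^sub>R e_theta_perp \<theta> + (fst z $ 2) *\<^sub>R e_z"

lemma Tmap_eq: "Tmap \<theta> z = Gmap \<theta> (Smap z)"
  by (simp add: Tmap_def Gmap_def Smap_def)

lemma cv_fubini:
  fixes k :: "real^3 \<Rightarrow> real^'n"
  assumes k: "integrable lborel k"
  shows "integrable (lborel \<Otimes>\<^sub>M lborel) (\<lambda>z. k (Tmap \<theta> z))"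
    and "(LINT x|lborel. k x) = (LINT p|lborel. LINT \<eta>|lborel. k (Tmap \<theta> (p, \<eta>)))"
proof -
  have km[measurable]: "k \<in> borel_measurable borel" using borel_measurable_integrable[OF k] by simp
  have gm[measurable]: "Gmap \<theta> \<in> borel_measurable borel"
    by (rule borel_measurable_continuous_onI) (simp add: Gmap_linear linear_continuous_on linear_linear)
  have kgm: "(\<lambda>v. k (Gmap \<theta> v)) \<in> borel_measurable borel" by measurable
  have i1: "integrable (distr lborel borel Smap) (\<lambda>v. k (Gmap \<theta> v))"
    using cv_rot(1)[OF k, of \<theta>] by (simp add: Smap_distr)
  have i2: "integrable (lborel :: ((real^2) \<times> real) measure) (\<lambda>z. k (Tmap \<theta> z))"
  proof -
    have "integrable (distr lborel borel Smap) (\<lambda>v. k (Gmap \<theta> v)) \<longleftrightarrow> integrable (lborel :: ((real^2) \<times> real) measure) (\<lambda>z. k (Gmap \<theta> (Smap z)))"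
      by (rule integrable_distr_eq) (simp_all add: kgm)
    then show ?thesis using i1 by (simp add: Tmap_eq)
  qed
  then show i3: "integrable (lborel \<Otimes>\<^sub>M lborel) (\<lambda>z. k (Tmap \<theta> z))"
    by (simp add: lborel_prod)
  have "(LINT x|lborel. k x) = (LINT v|lborel. k (Gmap \<theta> v))"
    using cv_rot(2)[OF k] by simp
  also have "\<dots> = integral\<^sup>L (distr lborel borel Smap) (\<lambda>v. k (Gmap \<theta> v))"
    by (simp add: Smap_distr)
  also have "\<dots> = (LINT z|(lborel :: ((real^2) \<times> real) measure). k (Tmap \<theta> z))"
  proof -
    have "integral\<^sup>L (distr lborel borel Smap) (\<lambda>v. k (Gmap \<theta> v)) = (LINT z|(lborel :: ((real^2) \<times> real) measure). k (Gmap \<theta> (Smap z)))"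
      by (rule integral_distr) (simp_all add: kgm)
    then show ?thesis by (simp add: Tmap_eq)
  qed
  also have "\<dots> = (LINT z|(lborel \<Otimes>\<^sub>M lborel). k (Tmap \<theta> z))"
    by (simp add: lborel_prod)
  also have "\<dots> = (LINT p|lborel. LINT \<eta>|lborel. k (Tmap \<theta> (p, \<eta>)))"
    using lborel_pair.integral_fst'[OF i3] by simp
  finally show "(LINT x|lborel. k x) = (LINT p|lborel. LINT \<eta>|lborel. k (Tmap \<theta> (p, \<eta>)))" .
qed



definition Mmap :: "real \<Rightarrow> real^2 \<Rightarrow> real^3" where
  "Mmap \<theta> w = E_rot \<theta> *v embed_plane w"

lemma Mmap_eq: "Mmap \<theta> w = (w$1) *\<^sub>R e_theta_perp \<theta> - (w$2) *\<^sub>R e_z"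
  unfolding vec_eq_iff forall_3
  by (simp add: Mmap_def E_rot_def embed_plane_def matrix_vector_mult_def sum_3 e_theta_perp_def e_z_def)

lemma Mmap_linear: "linear (Mmap \<theta>)"
  by (rule linearI) (auto simp: Mmap_eq algebra_simps)

lemma Mmap_bl: "bounded_linear (Mmap \<theta>)"
  using Mmap_linear linear_conv_bounded_linear by blast

lemma Mmap_norm: "norm (Mmap \<theta> w) = norm w"
proof -
  have c2: "cos \<theta> * (cos \<theta> * y) + sin \<theta> * (sin \<theta> * y) = y" for y
  proof -
    have "cos \<theta> * (cos \<theta> * y) + sin \<theta> * (sin \<theta> * y) = (cos \<theta> * cos \<theta> + sin \<theta> * sin \<theta>) * y"
      by algebra
    then show ?thesis by (simp only: sin_cos_squared_add3 mult_1)
  qed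
  have "Mmap \<theta> w \<bullet> Mmap \<theta> w = w \<bullet> w"
    by (simp add: Mmap_eq inner_vec_def sum_3 sum_2 e_theta_perp_def e_z_def algebra_simps c2)
  then show ?thesis by (simp add: norm_eq_sqrt_inner)
qed

lemma langevin_bound1: "\<bar>langevin x\<bar> \<le> 1"
proof -
  have pos: "langevin x \<le> 1" if x: "x > 0" for x :: real
  proof -
    have s: "sinh x > 0" using x by simp
    have "x * exp (- x) \<le> x" using x by simp
    also have "x \<le> sinh x" using sinh_ge_self[of x] x by simp
    finally have "x * (cosh x - sinh x) \<le> sinh x" by (simp add: cosh_minus_sinh)
    then have "cosh x / sinh x - 1 / x \<le> 1" using s x by (simp add: field_simps)
    then show ?thesis using x by (simp add: langevin_def)
  qed
  consider "x = 0" | "x > 0" | "x < 0" by linarith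
  then show ?thesis
  proof cases
    case 1 then show ?thesis by (simp add: langevin_def)
  next
    case 2 then show ?thesis using pos[of x] langevin_abs_le_pos[of x] by simp
  next
    case 3 then show ?thesis using pos[of "-x"] langevin_abs_le_pos[of "-x"] by (simp add: langevin_minus)
  qed
qed

lemma LF_norm_le1: "norm (langevin_field c v) \<le> 1"
proof -
  have "norm (langevin_field c v) = \<bar>langevin (norm v / c)\<bar> * norm (sgn v)"
    by (simp add: langevin_field_def)
  also have "\<dots> \<le> 1 * 1"
    by (rule mult_mono) (auto simp: langevin_bound1 norm_sgn)
  finally show ?thesis by simp
qed

lemma LF_scale:
  assumes G: "G \<noteq> 0"
  shows "langevin_field Hsat (G *\<^sub>R v) = psi (Hsat / G) (norm v) *\<^sub>R (G *\<^sub>R v) /\<^sub>R G"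
proof -
  have "psi Hsat (\<bar>G\<bar> * norm v) * G = psi (Hsat / G) (norm v)"
  proof (cases "G > 0")
    case True then show ?thesis by (simp add: psi_def field_simps)
  next
    case False
    then have "\<bar>G\<bar> = - G" using G by simp
    then show ?thesis using G langevin_minus[of "G * norm v / Hsat"]
      by (simp add: psi_def field_simps)
  qed
  then show ?thesis using G by (simp add: F_eq[of Hsat] field_simps)
qed

lemma e_inners: "e_theta \<theta> \<bullet> e_theta_perp \<theta> = 0" "e_theta_perp \<theta> \<bullet> e_theta_perp \<theta> = 1"
  "e_z \<bullet> e_theta_perp \<theta> = 0" "e_theta \<theta> \<bullet> e_z = 0" "e_theta_perp \<theta> \<bullet> e_z = 0" "e_z \<bullet> e_z = 1"
  by (simp_all add: e_theta_def e_theta_perp_def e_z_def inner_vec_def sum_3 sin_cos_squared_add3 add.commute[of "sin \<theta> * sin \<theta>"])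

lemma Tmap_inner: "Tmap \<theta> (p, \<eta>) \<bullet> e_theta_perp \<theta> = p$1" "Tmap \<theta> (p, \<eta>) \<bullet> e_z = p$2"
  by (simp_all add: Tmap_def inner_add_left e_inners)

lemma H_ffl_Tmap:
  assumes G: "G \<noteq> 0"
  shows "H_ffl \<theta> A1 A2 \<Lambda>1 \<Lambda>2 G (Tmap \<theta> (p, \<eta>)) t
       = G *\<^sub>R Mmap \<theta> (ffl_traj A1 A2 \<Lambda>1 \<Lambda>2 G t - p)"
  using G by (simp add: H_ffl_def Tmap_inner Mmap_eq ffl_traj_def algebra_simps)



lemma vd_iff_quot:
  fixes f :: "real \<Rightarrow> 'a::real_normed_vector"
  shows "(f has_vector_derivative D) (at t) \<longleftrightarrow> ((\<lambda>\<tau>. (f \<tau> - f t) /\<^sub>R (\<tau> - t)) \<longlongrightarrow> D) (at t)"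
proof -
  have e: "\<forall>\<^sub>F y in at t. norm (f y - f t - (y - t) *\<^sub>R D) / norm (y - t) = norm ((f y - f t) /\<^sub>R (y - t) - D)"
  proof -
    have "norm (f y - f t - (y - t) *\<^sub>R D) / norm (y - t) = norm ((f y - f t) /\<^sub>R (y - t) - D)" if "y \<noteq> t" for y
    proof -
      have a: "(f y - f t - (y - t) *\<^sub>R D) /\<^sub>R (y - t) = (f y - f t) /\<^sub>R (y - t) - ((y - t) *\<^sub>R D) /\<^sub>R (y - t)"
        by (simp add: scaleR_diff_right)
      have b: "((y - t) *\<^sub>R D) /\<^sub>R (y - t) = D" using that by simp
      have "(f y - f t) /\<^sub>R (y - t) - D = (f y - f t - (y - t) *\<^sub>R D) /\<^sub>R (y - t)"
        using a b by simp
      then show ?thesis by (simp add: divide_inverse_commute)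
    qed
    then show ?thesis by (simp add: eventually_at_filter)
  qed
  have "(f has_vector_derivative D) (at t) \<longleftrightarrow> ((\<lambda>y. norm (f y - f t - (y - t) *\<^sub>R D) / norm (y - t)) \<longlongrightarrow> 0) (at t)"
    by (simp add: has_vector_derivative_def has_derivative_iff_norm bounded_linear_scaleR_left)
  also have "\<dots> \<longleftrightarrow> ((\<lambda>y. norm ((f y - f t) /\<^sub>R (y - t) - D)) \<longlongrightarrow> 0) (at t)"
    by (rule tendsto_cong[OF e])
  also have "\<dots> \<longleftrightarrow> ((\<lambda>y. (f y - f t) /\<^sub>R (y - t) - D) \<longlongrightarrow> 0) (at t)"
    by (rule tendsto_norm_zero_iff)
  also have "\<dots> \<longleftrightarrow> ((\<lambda>\<tau>. (f \<tau> - f t) /\<^sub>R (\<tau> - t)) \<longlongrightarrow> D) (at t)"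
    by (rule LIM_zero_iff)
  finally show ?thesis .
qed

lemma vd_seq:
  fixes f :: "real \<Rightarrow> 'a::real_normed_vector"
  assumes "(f has_vector_derivative D) (at t)" "X \<longlonglongrightarrow> t" "\<And>i. X i \<noteq> t"
  shows "(\<lambda>i. (f (X i) - f t) /\<^sub>R (X i - t)) \<longlonglongrightarrow> D"
proof -
  have "((\<lambda>\<tau>. (f \<tau> - f t) /\<^sub>R (\<tau> - t)) \<longlongrightarrow> D) (at t)" using assms(1) vd_iff_quot by blast
  then show ?thesis using assms(2,3) unfolding tendsto_at_iff_sequentially by (auto simp: o_def)
qed

lemma line_vd:
  assumes "(g has_derivative g') (at u)"
  shows "((\<lambda>s::real. g (u + s *\<^sub>R w)) has_vector_derivative g' w) (at 0)"
proof -
  have bl: "bounded_linear g'" using assms by (rule has_derivative_bounded_linear)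
  have d1: "((\<lambda>s::real. u + s *\<^sub>R w) has_derivative (\<lambda>s. s *\<^sub>R w)) (at 0)"
    by (auto intro!: derivative_eq_intros)
  have d2: "(g has_derivative g') (at (u + 0 *\<^sub>R w))" using assms by simp
  have "((\<lambda>s::real. g (u + s *\<^sub>R w)) has_derivative (\<lambda>s. g' (s *\<^sub>R w))) (at 0)"
    using has_derivative_compose[OF d1 d2] by (simp add: o_def)
  then show ?thesis
    unfolding has_vector_derivative_def using linear.scaleR[OF bounded_linear.linear[OF bl]] by simp
qed

lemma LF_cont:
  assumes "c \<noteq> 0"
  shows "continuous_on UNIV (langevin_field c :: 'a::real_inner \<Rightarrow> 'a)"
  using F_has_deriv[OF assms] has_derivative_continuous continuous_at_imp_continuous_on by blast

lemma LF_meas[measurable]: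
  assumes "c \<noteq> 0"
  shows "(langevin_field c :: 'a::{real_inner, euclidean_space} \<Rightarrow> 'a) \<in> borel_measurable borel"
  by (rule borel_measurable_continuous_onI[OF LF_cont[OF assms]])

lemma DF_meas:
  fixes w :: "'a::euclidean_space"
  assumes h: "h \<noteq> 0"
  shows "(\<lambda>u. DF h u w) \<in> borel_measurable borel"
proof (rule borel_measurable_LIMSEQ_metric)
  let ?X = "\<lambda>i::nat. 1 / real (Suc i)"
  show "(\<lambda>u. (langevin_field h (u + ?X i *\<^sub>R w) - langevin_field h (0 + u)) /\<^sub>R (?X i - 0)) \<in> borel_measurable borel" for i
    using LF_meas[OF h] by measurable
  show "(\<lambda>i. (langevin_field h (u + ?X i *\<^sub>R w) - langevin_field h (0 + u)) /\<^sub>R (?X i - 0)) \<longlonglongrightarrow> DF h u w" for u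
  proof -
    have "(\<lambda>i. ((\<lambda>s. langevin_field h (u + s *\<^sub>R w)) (?X i) - (\<lambda>s. langevin_field h (u + s *\<^sub>R w)) 0) /\<^sub>R (?X i - 0)) \<longlonglongrightarrow> DF h u w"
      by (rule vd_seq[OF line_vd[OF F_has_deriv[OF h]]]) (use LIMSEQ_inverse_real_of_nat in \<open>auto simp: inverse_eq_divide\<close>)
    then show ?thesis by simp
  qed
qed

lemma matrix_DF_meas:
  assumes h: "h \<noteq> 0"
  shows "(\<lambda>u::real^2. matrix (DF h u)) \<in> borel_measurable borel"
proof -
  have "(\<lambda>u::real^2. matrix (DF h u) \<bullet> b) \<in> borel_measurable borel" if b: "b \<in> Basis" for b
  proof -
    obtain i j where bij: "b = axis i (axis j (1::real))" using b by (auto simp: Basis_vec_def)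
    have e: "matrix (DF h u) \<bullet> b = DF h u (axis j 1) \<bullet> axis i 1" for u :: "real^2"
      by (simp add: bij inner_axis matrix_def cart_eq_inner_axis[symmetric])
    show ?thesis unfolding e using DF_meas[OF h, of "axis j 1"] by measurable
  qed
  then show ?thesis by (simp add: borel_measurable_euclidean_space[where 'c="real^2^2"])
qed



lemma integral_scaleR_left_uncond:
  fixes c :: "'a::euclidean_space"
  shows "(LINT x|M. f x *\<^sub>R c) = (LINT x|M. f x) *\<^sub>R c"
proof (cases "integrable M f")
  case True then show ?thesis by simp
next
  case False
  show ?thesis
  proof (cases "c = 0")
    case True then show ?thesis by simp
  next
    case c: False
    have "\<not> integrable M (\<lambda>x. f x *\<^sub>R c)"
    proof
      assume "integrable M (\<lambda>x. f x *\<^sub>R c)"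
      then have "integrable M (\<lambda>x. (f x *\<^sub>R c) \<bullet> c)" by (rule integrable_inner_left)
      then have "integrable M (\<lambda>x. f x * (c \<bullet> c))" by simp
      then show False using False c by simp
    qed
    then show ?thesis using False by (simp add: not_integrable_integral_eq)
  qed
qed

lemma chain_vd:
  assumes g: "(g has_derivative g') (at (f t))" and f: "(f has_vector_derivative f') (at t)"
  shows "((\<lambda>\<tau>. g (f \<tau>)) has_vector_derivative g' f') (at t)"
proof -
  have bl: "bounded_linear g'" using g by (rule has_derivative_bounded_linear)
  have "((\<lambda>\<tau>. g (f \<tau>)) has_derivative (\<lambda>x. g' (x *\<^sub>R f'))) (at t)"
    using has_derivative_compose[OF f[unfolded has_vector_derivative_def] g] by (simp add: o_def)
  then show ?thesis
    unfolding has_vector_derivative_def using linear.scaleR[OF bounded_linear.linear[OF bl]] by simp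
qed

lemma traj_vd:
  assumes "sinusoidal \<Lambda>1" "sinusoidal \<Lambda>2" and G: "G \<noteq> 0"
  shows "\<exists>r'. (ffl_traj A1 A2 \<Lambda>1 \<Lambda>2 G has_vector_derivative r') (at t)"
proof -
  obtain w1 p1 where l1: "\<And>t. \<Lambda>1 t = sin (w1 * t + p1)" using assms(1) by (auto simp: sinusoidal_def)
  obtain w2 p2 where l2: "\<And>t. \<Lambda>2 t = sin (w2 * t + p2)" using assms(2) by (auto simp: sinusoidal_def)
  have e: "ffl_traj A1 A2 \<Lambda>1 \<Lambda>2 G = (\<lambda>\<tau>. (A1 * sin (w1 * \<tau> + p1) / G) *\<^sub>R (axis 1 1 :: real^2)
      + (A2 * sin (w2 * \<tau> + p2) / G) *\<^sub>R axis 2 1)"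
    by (rule ext) (simp add: ffl_traj_def vec_eq_iff forall_2 axis_def l1 l2)
  have d1: "((\<lambda>\<tau>. A1 * sin (w1 * \<tau> + p1) / G) has_real_derivative (A1 * (cos (w1 * t + p1) * w1) / G)) (at t)"
    using G by (auto intro!: derivative_eq_intros)
  have d2: "((\<lambda>\<tau>. A2 * sin (w2 * \<tau> + p2) / G) has_real_derivative (A2 * (cos (w2 * t + p2) * w2) / G)) (at t)"
    using G by (auto intro!: derivative_eq_intros)
  note v1 = has_vector_derivative_scaleR[OF d1 has_vector_derivative_const[of "axis 1 1 :: real^2"]]
  note v2 = has_vector_derivative_scaleR[OF d2 has_vector_derivative_const[of "axis 2 1 :: real^2"]]
  show ?thesis unfolding e
    using has_vector_derivative_add[OF v1 v2] by blast
qed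

lemma matrix_norm_bound:
  fixes f :: "real^2 \<Rightarrow> real^2"
  assumes "\<And>w. norm (f w) \<le> K * norm w"
  shows "norm (matrix f) \<le> real (card (Basis :: (real^2^2) set)) * K"
proof -
  have "norm (matrix f) \<le> (\<Sum>b\<in>Basis. \<bar>matrix f \<bullet> b\<bar>)" by (rule norm_le_l1)
  also have "\<dots> \<le> real (card (Basis :: (real^2^2) set)) * K"
  proof (rule sum_bounded_above)
    fix b :: "real^2^2" assume b: "b \<in> Basis"
    obtain i j where bij: "b = axis i (axis j (1::real))" using b by (auto simp: Basis_vec_def)
    have "\<bar>matrix f \<bullet> b\<bar> = \<bar>f (axis j 1) $ i\<bar>"
      by (simp add: bij inner_axis matrix_def)
    also have "\<dots> \<le> norm (f (axis j 1))" by (rule component_le_norm_cart)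
    also have "\<dots> \<le> K" using assms[of "axis j 1"] by simp
    finally show "\<bar>matrix f \<bullet> b\<bar> \<le> K" .
  qed
  finally show ?thesis .
qed

lemma mv_bl: "bounded_linear (\<lambda>A::real^2^2. A *v x)"
proof -
  have "linear (\<lambda>A::real^2^2. A *v x)"
    by (rule linearI) (simp_all add: matrix_vector_mult_add_rdistrib scaleR_matrix_vector_assoc)
  then show ?thesis using linear_conv_bounded_linear by blast
qed



theorem theorem3p2:
  fixes \<Omega> :: "(real^3) set" and \<rho> :: "real^3 \<Rightarrow> real"
    and P :: "real^3^3" and \<theta> G A1 A2 \<mu>0 m Hsat :: real
    and \<Lambda>1 \<Lambda>2 :: "real \<Rightarrow> real"
  assumes "\<Omega> \<noteq> {}" and "open \<Omega>" and "convex \<Omega>"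
    and "\<rho> \<in> borel_measurable lborel"
    and "integrable lborel (\<lambda>x. (\<rho> x)\<^sup>2)"
    and "integrable lborel \<rho>"
    and "\<And>x. \<rho> x \<ge> 0"
    and "\<And>x. x \<notin> \<Omega> \<Longrightarrow> \<rho> x = 0"
    and "0 \<le> \<theta>" and "\<theta> < pi"
    and "G \<noteq> 0"
    and "sinusoidal \<Lambda>1" and "sinusoidal \<Lambda>2"
    and "\<mu>0 > 0" and "m > 0" and "Hsat > 0"
  shows "\<forall>t. \<exists>D. ((\<lambda>\<tau>. magn_integral \<rho> \<theta> A1 A2 \<Lambda>1 \<Lambda>2 G Hsat \<tau>) has_vector_derivative D) (at t)
            \<and> - (\<mu>0 * m) *\<^sub>R (P *v D)
              = - (\<mu>0 * m) *\<^sub>R (P *v (E_rot \<theta> *v embed_plane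
                  (core_op (Hsat / G) (xray \<theta> \<rho>) (ffl_traj A1 A2 \<Lambda>1 \<Lambda>2 G t)
                    *v vector_derivative (ffl_traj A1 A2 \<Lambda>1 \<Lambda>2 G) (at t))))"
proof
  fix t
  have G: "G \<noteq> 0" and Hs: "Hsat \<noteq> 0" using assms by auto
  define h where "h = Hsat / G"
  have h0: "h \<noteq> 0" using G Hs by (simp add: h_def)
  define r where "r = ffl_traj A1 A2 \<Lambda>1 \<Lambda>2 G"
  define q where "q = xray \<theta> \<rho>"
  have \<rho>m[measurable]: "\<rho> \<in> borel_measurable borel" using assms(4) by simp
  have \<rho>i: "integrable lborel \<rho>" by (rule assms(6))
  have Fm[measurable]: "(langevin_field h :: real^2 \<Rightarrow> real^2) \<in> borel_measurable borel"
    by (rule LF_meas[OF h0])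
  have FHm[measurable]: "(langevin_field Hsat :: real^3 \<Rightarrow> real^3) \<in> borel_measurable borel"
    by (rule LF_meas[OF Hs])

  define c :: "real^2" where "c = axis 1 1"
  have nc: "norm c = 1" by (simp add: c_def)
  have "integrable lborel (\<lambda>x. \<rho> x *\<^sub>R c)" using \<rho>i by simp
  from cv_fubini(1)[OF this, of \<theta>]
  have "integrable (lborel \<Otimes>\<^sub>M lborel) (\<lambda>z. norm (\<rho> (Tmap \<theta> z) *\<^sub>R c))" by (rule integrable_norm)
  then have pi: "integrable (lborel \<Otimes>\<^sub>M lborel) (\<lambda>z. \<rho> (Tmap \<theta> z))"
    using assms(7) nc by simp
  have qe: "q p = (LINT \<eta>|lborel. \<rho> (Tmap \<theta> (p, \<eta>)))" for p
    by (simp add: q_def xray_def Tmap_def)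
  have qi: "integrable lborel q"
    using lborel_pair.integrable_fst'[OF pi] by (simp add: qe[abs_def])
  have qm[measurable]: "q \<in> borel_measurable borel"
    using borel_measurable_integrable[OF qi] by simp

  define \<Phi> where "\<Phi> \<tau> = (LINT p|lborel. q p *\<^sub>R langevin_field h (r \<tau> - p))" for \<tau>
  have \<Phi>i: "integrable lborel (\<lambda>p. q p *\<^sub>R langevin_field h (r \<tau> - p))" for \<tau>
  proof (rule Bochner_Integration.integrable_bound[OF qi])
    show "(\<lambda>p. q p *\<^sub>R langevin_field h (r \<tau> - p)) \<in> borel_measurable lborel" by measurable
    show "AE p in lborel. norm (q p *\<^sub>R langevin_field h (r \<tau> - p)) \<le> norm (q p)"
      by (intro AE_I2) (simp add: mult_left_le[OF LF_norm_le1 abs_ge_zero])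
  qed

  have Hcont: "continuous_on UNIV (\<lambda>x. H_ffl \<theta> A1 A2 \<Lambda>1 \<Lambda>2 G x \<tau>)" for \<tau>
    unfolding H_ffl_def by (intro continuous_intros)
  have Hm[measurable]: "(\<lambda>x. H_ffl \<theta> A1 A2 \<Lambda>1 \<Lambda>2 G x \<tau>) \<in> borel_measurable borel" for \<tau>
    by (rule borel_measurable_continuous_onI[OF Hcont])
  have magn: "magn_integral \<rho> \<theta> A1 A2 \<Lambda>1 \<Lambda>2 G Hsat \<tau> = Mmap \<theta> (\<Phi> \<tau>)" for \<tau>
  proof -
    define k where "k x = \<rho> x *\<^sub>R langevin_field Hsat (H_ffl \<theta> A1 A2 \<Lambda>1 \<Lambda>2 G x \<tau>)" for x
    have ki: "integrable lborel k"
    proof (rule Bochner_Integration.integrable_bound[OF \<rho>i])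
      show "k \<in> borel_measurable lborel" unfolding k_def by measurable
      show "AE x in lborel. norm (k x) \<le> norm (\<rho> x)"
        by (intro AE_I2) (simp add: k_def mult_left_le[OF LF_norm_le1 abs_ge_zero])
    qed
    have kT: "k (Tmap \<theta> (p, \<eta>)) = \<rho> (Tmap \<theta> (p, \<eta>)) *\<^sub>R Mmap \<theta> (langevin_field h (r \<tau> - p))" for p \<eta>
    proof -
      have sc: "Mmap \<theta> (a *\<^sub>R w) = a *\<^sub>R Mmap \<theta> w" for a w
        by (simp add: Mmap_eq algebra_simps)
      have iG: "inverse G * (a * G) = a" for a using G by simp
      show ?thesis
        using G by (simp add: k_def H_ffl_Tmap LF_scale Mmap_norm F_eq[of "Hsat / G"] sc h_def r_def iG)
    qed
    have "magn_integral \<rho> \<theta> A1 A2 \<Lambda>1 \<Lambda>2 G Hsat \<tau> = (LINT x|lborel. k x)"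
      by (simp add: magn_integral_def k_def)
    also have "\<dots> = (LINT p|lborel. LINT \<eta>|lborel. k (Tmap \<theta> (p, \<eta>)))"
      by (rule cv_fubini(2)[OF ki])
    also have "\<dots> = (LINT p|lborel. q p *\<^sub>R Mmap \<theta> (langevin_field h (r \<tau> - p)))"
      by (simp add: kT integral_scaleR_left_uncond qe)
    also have "\<dots> = (LINT p|lborel. Mmap \<theta> (q p *\<^sub>R langevin_field h (r \<tau> - p)))"
      by (simp add: Mmap_eq algebra_simps)
    also have "\<dots> = Mmap \<theta> (\<Phi> \<tau>)"
      unfolding \<Phi>_def by (rule integral_bounded_linear[OF Mmap_bl \<Phi>i])
    finally show ?thesis .
  qed

  obtain r' where r': "(r has_vector_derivative r') (at t)"
    using traj_vd[OF assms(12,13) G] unfolding r_def by blast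
  define Dp where "Dp p = q p *\<^sub>R DF h (r t - p) r'" for p
  have DFm: "(\<lambda>u. DF h u r') \<in> borel_measurable borel" by (rule DF_meas[OF h0])
  have Dpm[measurable]: "Dp \<in> borel_measurable borel"
    unfolding Dp_def using DFm by measurable
  have \<Phi>d: "(\<Phi> has_vector_derivative (LINT p|lborel. Dp p)) (at t)"
    unfolding vd_iff_quot tendsto_at_iff_sequentially
  proof (intro allI impI)
    fix X :: "nat \<Rightarrow> real"
    assume X1: "\<forall>i. X i \<in> UNIV - {t}" and X2: "X \<longlonglongrightarrow> t"
    have Xt: "X i \<noteq> t" for i using X1 by auto
    have rq: "(\<lambda>i. (r (X i) - r t) /\<^sub>R (X i - t)) \<longlonglongrightarrow> r'"
      by (rule vd_seq[OF r' X2 Xt])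
    then have "Bseq (\<lambda>i. (r (X i) - r t) /\<^sub>R (X i - t))"
      using convergent_imp_Bseq convergentI by blast
    then obtain B where B: "B > 0" "\<And>i. norm ((r (X i) - r t) /\<^sub>R (X i - t)) \<le> B"
      by (auto elim: BseqE)
    define s where "s i p = q p *\<^sub>R ((langevin_field h (r (X i) - p) - langevin_field h (r t - p)) /\<^sub>R (X i - t))" for i p
    have "(\<lambda>i. integral\<^sup>L lborel (s i)) \<longlonglongrightarrow> integral\<^sup>L lborel Dp"
    proof (rule integral_dominated_convergence[where w="\<lambda>p. (3 / \<bar>h\<bar> * B) * q p"])
      show "Dp \<in> borel_measurable lborel" by simp
      show "s i \<in> borel_measurable lborel" for i unfolding s_def by measurable
      show "integrable lborel (\<lambda>p. (3 / \<bar>h\<bar> * B) * q p)" using qi by simp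
      show "AE p in lborel. (\<lambda>i. s i p) \<longlonglongrightarrow> Dp p"
      proof (rule AE_I2)
        fix p
        have "((\<lambda>\<tau>. langevin_field h (r \<tau> - p)) has_vector_derivative DF h (r t - p) r') (at t)"
        proof (rule chain_vd[OF F_has_deriv[OF h0]])
          show "((\<lambda>\<tau>. r \<tau> - p) has_vector_derivative r') (at t)"
            using r' by (simp add: has_vector_derivative_diff_const)
        qed
        from vd_seq[OF this X2 Xt]
        have "(\<lambda>i. (langevin_field h (r (X i) - p) - langevin_field h (r t - p)) /\<^sub>R (X i - t)) \<longlonglongrightarrow> DF h (r t - p) r'" .
        then show "(\<lambda>i. s i p) \<longlonglongrightarrow> Dp p"
          unfolding s_def Dp_def by (intro tendsto_scaleR tendsto_const)
      qed
      show "AE p in lborel. norm (s i p) \<le> (3 / \<bar>h\<bar> * B) * q p" for i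
      proof (rule AE_I2)
        fix p
        have l: "norm (langevin_field h (r (X i) - p) - langevin_field h (r t - p))
            \<le> 3 / \<bar>h\<bar> * norm (r (X i) - r t)"
          using F_lipschitz[OF h0, of "r (X i) - p" "r t - p"] by simp
        have "inverse \<bar>X i - t\<bar> * norm (langevin_field h (r (X i) - p) - langevin_field h (r t - p))
            \<le> inverse \<bar>X i - t\<bar> * (3 / \<bar>h\<bar> * norm (r (X i) - r t))"
          by (rule mult_left_mono[OF l]) simp
        also have "\<dots> = 3 / \<bar>h\<bar> * (inverse \<bar>X i - t\<bar> * norm (r (X i) - r t))"
          by (simp only: ac_simps)
        finally have "norm ((langevin_field h (r (X i) - p) - langevin_field h (r t - p)) /\<^sub>R (X i - t))
            \<le> 3 / \<bar>h\<bar> * norm ((r (X i) - r t) /\<^sub>R (X i - t))"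
          by (simp only: norm_scaleR abs_inverse)
        also have "\<dots> \<le> 3 / \<bar>h\<bar> * B" by (rule mult_left_mono[OF B(2)]) simp
        finally have "norm ((langevin_field h (r (X i) - p) - langevin_field h (r t - p)) /\<^sub>R (X i - t))
            \<le> 3 / \<bar>h\<bar> * B" .
        moreover have q0: "q p \<ge> 0" unfolding qe
          by (rule Bochner_Integration.integral_nonneg) (simp add: assms(7))
        moreover have "norm (s i p) = \<bar>q p\<bar> * norm ((langevin_field h (r (X i) - p) - langevin_field h (r t - p)) /\<^sub>R (X i - t))"
          by (simp only: s_def norm_scaleR)
        ultimately show "norm (s i p) \<le> (3 / \<bar>h\<bar> * B) * q p"
          by (metis (no_types) mult.commute mult_left_mono abs_of_nonneg)
      qed
    qed
    moreover have "integral\<^sup>L lborel (s i) = (\<Phi> (X i) - \<Phi> t) /\<^sub>R (X i - t)" for i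
    proof -
      have "s i = (\<lambda>p. inverse (X i - t) *\<^sub>R (q p *\<^sub>R langevin_field h (r (X i) - p) - q p *\<^sub>R langevin_field h (r t - p)))"
        by (auto simp: s_def fun_eq_iff algebra_simps)
      then show ?thesis
        using \<Phi>i by (simp add: \<Phi>_def integral_diff)
    qed
    ultimately show "((\<lambda>\<tau>. (\<Phi> \<tau> - \<Phi> t) /\<^sub>R (\<tau> - t)) \<circ> X) \<longlonglongrightarrow> integral\<^sup>L lborel Dp"
      by (simp add: o_def)
  qed

  have core: "core_op h q (r t) *v r' = (LINT p|lborel. Dp p)"
  proof -
    define Mt where "Mt y = matrix (DF h (r t - y))" for y
    have fd: "frechet_derivative (\<lambda>r'. langevin_field h (r' - y)) (at (r t)) = DF h (r t - y)" for y
    proof -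
      have "((\<lambda>z. langevin_field h (z - y)) has_derivative DF h (r t - y)) (at (r t))"
        using has_derivative_compose[OF has_derivative_diff[OF has_derivative_ident has_derivative_const] F_has_deriv[OF h0, of "r t - y"]]
        by (simp add: o_def)
      then show ?thesis by (simp add: frechet_derivative_at[symmetric])
    qed
    have ce: "core_op h q (r t) = (LINT y|lborel. q y *\<^sub>R Mt y)"
      by (simp add: core_op_def fd Mt_def)
    have Mtm[measurable]: "Mt \<in> borel_measurable borel"
      unfolding Mt_def using matrix_DF_meas[OF h0] by measurable
    have Mtb: "norm (Mt y) \<le> real (card (Basis :: (real^2^2) set)) * (3 / \<bar>h\<bar>)" for y
      unfolding Mt_def by (rule matrix_norm_bound) (rule DF_bound[OF h0])
    have Mti: "integrable lborel (\<lambda>y. q y *\<^sub>R Mt y)"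
    proof (rule Bochner_Integration.integrable_bound[where f="\<lambda>y. (real (card (Basis :: (real^2^2) set)) * (3 / \<bar>h\<bar>)) * q y"])
      show "integrable lborel (\<lambda>y. (real (card (Basis :: (real^2^2) set)) * (3 / \<bar>h\<bar>)) * q y)"
        using qi by simp
      show "(\<lambda>y. q y *\<^sub>R Mt y) \<in> borel_measurable lborel" by measurable
      show "AE y in lborel. norm (q y *\<^sub>R Mt y) \<le> norm ((real (card (Basis :: (real^2^2) set)) * (3 / \<bar>h\<bar>)) * q y)"
      proof (rule AE_I2)
        fix y
        have "\<bar>q y\<bar> * norm (Mt y) \<le> \<bar>q y\<bar> * (real (card (Basis :: (real^2^2) set)) * (3 / \<bar>h\<bar>))"
          by (rule mult_left_mono[OF Mtb]) simp
        then show "norm (q y *\<^sub>R Mt y) \<le> norm ((real (card (Basis :: (real^2^2) set)) * (3 / \<bar>h\<bar>)) * q y)"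
          by (simp add: abs_mult mult.commute)
      qed
    qed
    have lin: "linear (DF h u)" for u :: "real^2"
      using has_derivative_bounded_linear[OF F_has_deriv[OF h0]] bounded_linear.linear by blast
    have "core_op h q (r t) *v r' = (LINT y|lborel. (q y *\<^sub>R Mt y) *v r')"
      unfolding ce by (rule integral_bounded_linear[OF mv_bl Mti, symmetric])
    also have "\<dots> = (LINT p|lborel. Dp p)"
      by (simp add: Dp_def Mt_def scaleR_matrix_vector_assoc[symmetric] matrix_works[OF lin[unfolded linear_matrix_vector_mul_eq[symmetric]]])
    finally show ?thesis .
  qed

  have md: "((\<lambda>\<tau>. magn_integral \<rho> \<theta> A1 A2 \<Lambda>1 \<Lambda>2 G Hsat \<tau>) has_vector_derivative Mmap \<theta> (LINT p|lborel. Dp p)) (at t)"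
    unfolding magn by (rule bounded_linear.has_vector_derivative[OF Mmap_bl \<Phi>d])
  have vd: "vector_derivative (ffl_traj A1 A2 \<Lambda>1 \<Lambda>2 G) (at t) = r'"
    using vector_derivative_at[OF r'] by (simp add: r_def)
  show "\<exists>D. ((\<lambda>\<tau>. magn_integral \<rho> \<theta> A1 A2 \<Lambda>1 \<Lambda>2 G Hsat \<tau>) has_vector_derivative D) (at t)
            \<and> - (\<mu>0 * m) *\<^sub>R (P *v D)
              = - (\<mu>0 * m) *\<^sub>R (P *v (E_rot \<theta> *v embed_plane
                  (core_op (Hsat / G) (xray \<theta> \<rho>) (ffl_traj A1 A2 \<Lambda>1 \<Lambda>2 G t)
                    *v vector_derivative (ffl_traj A1 A2 \<Lambda>1 \<Lambda>2 G) (at t))))"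
    using md core vd by (auto simp: Mmap_def h_def q_def r_def)
qed

end
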